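(* Consider the linear program $\min\{c^\top x + \sum_{i=1}^t (d^i)^\top y^i : T^i x + Q^i y^i = h^i\ (i \in [t]),\ x \in X,\ y^i \in Y^i\ (i\in[t])\}$ and let $\mathcal{F}' := \{(x,\theta^1,\dots,\theta^t) : x \in X,\ (h^i - T^i x, \theta^i) \in \mathrm{epi}(f^i)\ \forall i \in [t]\}$. Let $\rho \in \mathbb{R}^n$ and $\rho_0^1,\dots,\rho_0^t \ge 0$, and assume $\sigma_{\mathcal{F}'}(\rho,\rho_0^1,\ldots,\rho_0^t)$ is finite. If $(\hat\alpha^1,\dots,\hat\alpha^t)$ is an optimal solution of $$\max_{\alpha^1,\dots,\alpha^t}\Big\{-\sum_{i\in[t]}(\alpha^i)^\top h^i + \sigma_X\Big(\rho + \sum_{i\in[t]}(T^i)^\top\alpha^i\Big) + \sum_{i\in[t]}\sigma_{Y^i}\big((Q^i)^\top\alpha^i + \rho_0^i d^i\big)\Big\},$$ then every $(x,\theta^1,\dots,\theta^t)$ with $x \in X$ satisfying the cuts $(\hat\alpha^i)^\top(h^i - T^i x) + \rho_0^i\theta^i \ge \sigma_{\mathrm{epi}(f^i)}(\hat\alpha^i,\rho_0^i)$ for all $i\in[t]$ also satisfies $\rho^\top x + \sum_{i\in[t]}\rho_0^i\theta^i \ge \sigma_{\mathcal{F}'}(\rho,\rho_0^1,\ldots,\rho_0^t)$.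
   Context: $X \subseteq \mathbb{R}^n$ and $Y^i \subseteq \mathbb{R}^{m_i}$ ($i \in [t]$) are nonempty polyhedra, $T^i \in \mathbb{R}^{p_i \times n}$, $Q^i \in \mathbb{R}^{p_i\times m_i}$, $h^i \in \mathbb{R}^{p_i}$, $d^i \in \mathbb{R}^{m_i}$. For each $i$, $f^i(w) := \inf\{(d^i)^\top y^i : Q^i y^i = w,\ y^i \in Y^i\}$ and $\mathrm{epi}(f^i) := \{(w,\theta) : \theta \ge f^i(w)\}$. For $\mathcal{X} \subseteq \mathbb{R}^k$, $\sigma_{\mathcal{X}}(\alpha) := \inf_{x \in \mathcal{X}}\alpha^\top x$; for sets of tuples the argument is the concatenated coefficient vector. *)

theory Defs
  imports "HOL-Analysis.Analysis" "HOL-Library.Extended_Real" "HOL-Library.Function_Algebras"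
begin

text \<open>Vectors of R^k are represented as functions nat => real vanishing outside {..<k};
  matrices in R^(p x m) as functions nat => nat => real (only entries r<p, j<m matter).\<close>

definition vecs :: "nat \<Rightarrow> (nat \<Rightarrow> real) set" where
  "vecs k = {x. \<forall>j\<ge>k. x j = 0}"

definition dotn :: "nat \<Rightarrow> (nat \<Rightarrow> real) \<Rightarrow> (nat \<Rightarrow> real) \<Rightarrow> real" where
  "dotn k a x = (\<Sum>j<k. a j * x j)"

definition mat_vec :: "nat \<Rightarrow> nat \<Rightarrow> (nat \<Rightarrow> nat \<Rightarrow> real) \<Rightarrow> (nat \<Rightarrow> real) \<Rightarrow> (nat \<Rightarrow> real)" where
  "mat_vec p m M y = (\<lambda>r. if r < p then (\<Sum>j<m. M r j * y j) else 0)"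

definition matT_vec :: "nat \<Rightarrow> nat \<Rightarrow> (nat \<Rightarrow> nat \<Rightarrow> real) \<Rightarrow> (nat \<Rightarrow> real) \<Rightarrow> (nat \<Rightarrow> real)" where
  "matT_vec p m M a = (\<lambda>j. if j < m then (\<Sum>r<p. M r j * a r) else 0)"

definition polyhedron :: "nat \<Rightarrow> (nat \<Rightarrow> real) set \<Rightarrow> bool" where
  "polyhedron k P \<longleftrightarrow> (\<exists>(q::nat) A b. P = {x \<in> vecs k. \<forall>r<q. dotn k (A r) x \<le> b r})"

definition sigma :: "nat \<Rightarrow> (nat \<Rightarrow> real) set \<Rightarrow> (nat \<Rightarrow> real) \<Rightarrow> ereal" where
  "sigma k S a = (INF x\<in>S. ereal (dotn k a x))"

definition valf :: "nat \<Rightarrow> nat \<Rightarrow> (nat \<Rightarrow> nat \<Rightarrow> real) \<Rightarrow> (nat \<Rightarrow> real) \<Rightarrow> (nat \<Rightarrow> real) set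
    \<Rightarrow> (nat \<Rightarrow> real) \<Rightarrow> ereal" where
  "valf p m Q d Y w = (INF y\<in>{y \<in> Y. mat_vec p m Q y = w}. ereal (dotn m d y))"

definition epi :: "nat \<Rightarrow> nat \<Rightarrow> (nat \<Rightarrow> nat \<Rightarrow> real) \<Rightarrow> (nat \<Rightarrow> real) \<Rightarrow> (nat \<Rightarrow> real) set
    \<Rightarrow> ((nat \<Rightarrow> real) \<times> real) set" where
  "epi p m Q d Y = {(w, \<theta>). w \<in> vecs p \<and> valf p m Q d Y w \<le> ereal \<theta>}"

definition sigma_epi :: "nat \<Rightarrow> ((nat \<Rightarrow> real) \<times> real) set \<Rightarrow> (nat \<Rightarrow> real) \<Rightarrow> real \<Rightarrow> ereal" where
  "sigma_epi p E a r0 = (INF z\<in>E. ereal (dotn p a (fst z) + r0 * snd z))"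

definition Fprime :: "nat \<Rightarrow> (nat \<Rightarrow> real) set \<Rightarrow> nat \<Rightarrow> (nat \<Rightarrow> nat) \<Rightarrow> (nat \<Rightarrow> nat)
    \<Rightarrow> (nat \<Rightarrow> nat \<Rightarrow> nat \<Rightarrow> real) \<Rightarrow> (nat \<Rightarrow> nat \<Rightarrow> nat \<Rightarrow> real) \<Rightarrow> (nat \<Rightarrow> nat \<Rightarrow> real)
    \<Rightarrow> (nat \<Rightarrow> nat \<Rightarrow> real) \<Rightarrow> (nat \<Rightarrow> (nat \<Rightarrow> real) set)
    \<Rightarrow> ((nat \<Rightarrow> real) \<times> (nat \<Rightarrow> real)) set" where
  "Fprime n X t p m T Q h d Y =
     {(x, \<theta>). x \<in> X \<and> \<theta> \<in> vecs t \<and>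
        (\<forall>i<t. (h i - mat_vec (p i) n (T i) x, \<theta> i) \<in> epi (p i) (m i) (Q i) (d i) (Y i))}"

definition sigma_F :: "nat \<Rightarrow> nat \<Rightarrow> ((nat \<Rightarrow> real) \<times> (nat \<Rightarrow> real)) set \<Rightarrow> (nat \<Rightarrow> real)
    \<Rightarrow> (nat \<Rightarrow> real) \<Rightarrow> ereal" where
  "sigma_F n t F \<rho> \<rho>0 = (INF z\<in>F. ereal (dotn n \<rho> (fst z) + (\<Sum>i<t. \<rho>0 i * snd z i)))"

definition dual_obj :: "nat \<Rightarrow> (nat \<Rightarrow> real) set \<Rightarrow> nat \<Rightarrow> (nat \<Rightarrow> nat) \<Rightarrow> (nat \<Rightarrow> nat)
    \<Rightarrow> (nat \<Rightarrow> nat \<Rightarrow> nat \<Rightarrow> real) \<Rightarrow> (nat \<Rightarrow> nat \<Rightarrow> nat \<Rightarrow> real) \<Rightarrow> (nat \<Rightarrow> nat \<Rightarrow> real)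
    \<Rightarrow> (nat \<Rightarrow> nat \<Rightarrow> real) \<Rightarrow> (nat \<Rightarrow> (nat \<Rightarrow> real) set)
    \<Rightarrow> (nat \<Rightarrow> real) \<Rightarrow> (nat \<Rightarrow> real) \<Rightarrow> (nat \<Rightarrow> nat \<Rightarrow> real) \<Rightarrow> ereal" where
  "dual_obj n X t p m T Q h d Y \<rho> \<rho>0 \<alpha> =
     ereal (- (\<Sum>i<t. dotn (p i) (\<alpha> i) (h i)))
     + sigma n X (\<rho> + (\<Sum>i<t. matT_vec (p i) n (T i) (\<alpha> i)))
     + (\<Sum>i<t. sigma (m i) (Y i) (matT_vec (p i) (m i) (Q i) (\<alpha> i) + (\<lambda>j. \<rho>0 i * d i j)))"

end

theory Submission
  imports Defs
begin


inductive_set cone_of :: "(('j \<Rightarrow> real) \<times> real) set \<Rightarrow> (('j \<Rightarrow> real) \<times> real) set" for R where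
  cz: "((\<lambda>_. 0), 0) \<in> cone_of R"
| cb: "r \<in> R \<Longrightarrow> r \<in> cone_of R"
| ca: "(a, b) \<in> cone_of R \<Longrightarrow> (a', b') \<in> cone_of R \<Longrightarrow> ((\<lambda>j. a j + a' j), b + b') \<in> cone_of R"
| cs: "(a, b) \<in> cone_of R \<Longrightarrow> 0 \<le> c \<Longrightarrow> ((\<lambda>j. c * a j), c * b) \<in> cone_of R"

lemma cone_of_sub:
  assumes "S \<subseteq> Q" and "((\<lambda>_. 0), 0) \<in> Q"
    and "\<And>a b a' b'. (a,b)\<in>Q \<Longrightarrow> (a',b')\<in>Q \<Longrightarrow> ((\<lambda>j. a j + a' j), b+b') \<in> Q"
    and "\<And>a b c. (a,b)\<in>Q \<Longrightarrow> 0 \<le> c \<Longrightarrow> ((\<lambda>j. c * a j), c*b) \<in> Q"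
  shows "cone_of S \<subseteq> Q"
proof
  fix x assume "x \<in> cone_of S" then show "x \<in> Q" by induct (use assms in auto)
qed

lemma fm:
  fixes J :: "'j set"
  assumes "finite J"
  shows "finite R \<Longrightarrow> \<not>(\<exists>z. \<forall>r\<in>R. (\<Sum>j\<in>J. fst r j * z j) \<le> snd r) \<Longrightarrow>
     \<exists>a b. (a,b) \<in> cone_of R \<and> (\<forall>j\<in>J. a j = 0) \<and> b < 0"
using assms proof (induction J arbitrary: R rule: finite_induct)
  case empty
  then obtain r where "r \<in> R" "snd r < 0" by force
  then show ?case by (metis cone_of.cb prod.collapse empty_iff)
next
  case (insert j0 J)
  define P where "P = {r\<in>R. fst r j0 > 0}"
  define N where "N = {r\<in>R. fst r j0 < 0}"
  define Z where "Z = {r\<in>R. fst r j0 = 0}"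
  define comb where "comb = (\<lambda>(p::('j \<Rightarrow> real) \<times> real, q::('j \<Rightarrow> real) \<times> real).
      ((\<lambda>j. (- fst q j0) * fst p j + fst p j0 * fst q j), (- fst q j0) * snd p + fst p j0 * snd q))"
  define R' where "R' = Z \<union> comb ` (P \<times> N)"
  have finP: "finite P" and finN: "finite N" using insert.prems(1) unfolding P_def N_def by auto
  have fin: "finite R'" using insert.prems(1) finP finN unfolding R'_def Z_def by auto
  have inf': "\<not>(\<exists>z. \<forall>r\<in>R'. (\<Sum>j\<in>J. fst r j * z j) \<le> snd r)"
  proof
    assume "\<exists>z. \<forall>r\<in>R'. (\<Sum>j\<in>J. fst r j * z j) \<le> snd r"
    then obtain z where z: "\<forall>r\<in>R'. (\<Sum>j\<in>J. fst r j * z j) \<le> snd r" by blast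
    define L where "L = (\<lambda>r::('j \<Rightarrow> real) \<times> real. (\<Sum>j\<in>J. fst r j * z j))"
    define s where "s = (\<lambda>r. (snd r - L r) / fst r j0)"
    have sle: "s q \<le> s p" if "p \<in> P" "q \<in> N" for p q
    proof -
      have "comb (p,q) \<in> R'" using that unfolding R'_def by blast
      then have "(\<Sum>j\<in>J. fst (comb (p,q)) j * z j) \<le> snd (comb (p,q))" using z by blast
      moreover have "(\<Sum>j\<in>J. fst (comb (p,q)) j * z j) = (- fst q j0) * L p + fst p j0 * L q"
        unfolding L_def comb_def sum_distrib_left sum.distrib[symmetric] by (simp add: algebra_simps)
      ultimately have h: "(- fst q j0) * L p + fst p j0 * L q \<le> (- fst q j0) * snd p + fst p j0 * snd q"
        by (simp add: comb_def)
      have pp: "fst p j0 > 0" and qn: "fst q j0 < 0" using that P_def N_def by auto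
      have "(snd q - L q) / fst q j0 \<le> (snd p - L p) / fst p j0"
        using h pp qn by (simp add: divide_simps algebra_simps)
      then show ?thesis unfolding s_def .
    qed
    define v where "v = (if P = {} then (if N = {} then 0 else Max (s ` N)) else Min (s ` P))"
    have vP: "v \<le> s p" if "p\<in>P" for p
      using that finP unfolding v_def by auto
    have vN: "s q \<le> v" if "q \<in> N" for q
    proof (cases "P = {}")
      case True then show ?thesis using that finN unfolding v_def by auto
    next
      case False then show ?thesis using that finP sle unfolding v_def by auto
    qed
    define z' where "z' = z(j0 := v)"
    have "\<forall>r\<in>R. (\<Sum>j\<in>insert j0 J. fst r j * z' j) \<le> snd r"
    proof
      fix r assume r: "r \<in> R"
      have sJ: "(\<Sum>j\<in>J. fst r j * z' j) = L r"
        unfolding L_def z'_def using insert.hyps(2) by (intro sum.cong) auto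
      have eq: "(\<Sum>j\<in>insert j0 J. fst r j * z' j) = fst r j0 * v + L r"
        using insert.hyps sJ by (simp add: z'_def)
      consider "fst r j0 = 0" | "fst r j0 > 0" | "fst r j0 < 0" by linarith
      then show "(\<Sum>j\<in>insert j0 J. fst r j * z' j) \<le> snd r"
      proof cases
        case 1
        then have "r \<in> R'" using r unfolding R'_def Z_def by auto
        then show ?thesis using z eq 1 unfolding L_def by auto
      next
        case 2
        then have "r \<in> P" using r P_def by auto
        then have "v \<le> s r" by (rule vP)
        then have "fst r j0 * v \<le> fst r j0 * s r" using 2 by (simp add: mult_left_mono)
        also have "fst r j0 * s r = snd r - L r" using 2 unfolding s_def by simp
        finally show ?thesis using eq by simp
      next
        case 3
        then have "r \<in> N" using r N_def by auto
        then have "s r \<le> v" by (rule vN)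
        then have "fst r j0 * v \<le> fst r j0 * s r" using 3 by (simp add: mult_left_mono_neg)
        also have "fst r j0 * s r = snd r - L r" using 3 unfolding s_def by simp
        finally show ?thesis using eq by simp
      qed
    qed
    then show False using insert.prems(2) by blast
  qed
  from insert.IH[OF fin inf'] obtain a b where ab: "(a,b)\<in>cone_of R'" "\<forall>j\<in>J. a j = 0" "b<0"
    by blast
  have sub: "cone_of R' \<subseteq> {(a,b). (a,b) \<in> cone_of R \<and> a j0 = 0}"
  proof (rule cone_of_sub)
    show "R' \<subseteq> {(a, b). (a, b) \<in> cone_of R \<and> a j0 = 0}"
    proof
      fix r assume "r \<in> R'"
      then consider "r \<in> Z" | p q where "p \<in> P" "q \<in> N" "r = comb (p,q)" unfolding R'_def by blast
      then show "r \<in> {(a, b). (a, b) \<in> cone_of R \<and> a j0 = 0}"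
      proof cases
        case 1 then show ?thesis unfolding Z_def using cone_of.cb[of r R] by (cases r) auto
      next
        case 2
        have pR: "p \<in> cone_of R" and qR: "q \<in> cone_of R" using 2 P_def N_def by (auto intro: cone_of.cb)
        have c1: "((\<lambda>j. (- fst q j0) * fst p j), (- fst q j0) * snd p) \<in> cone_of R"
          using cone_of.cs[of "fst p" "snd p" R "- fst q j0"] pR 2 N_def by auto
        have c2: "((\<lambda>j. fst p j0 * fst q j), fst p j0 * snd q) \<in> cone_of R"
          using cone_of.cs[of "fst q" "snd q" R "fst p j0"] qR 2 P_def by auto
        have "r \<in> cone_of R" using cone_of.ca[OF c1 c2] 2 by (simp add: comb_def)
        moreover have "fst r j0 = 0" using 2 by (simp add: comb_def)
        ultimately show ?thesis by (simp add: case_prod_beta)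
      qed
    qed
  qed (auto intro: cone_of.intros)
  show ?case using ab sub by auto
qed



lemma sum_fun_app: "(\<Sum>i\<in>I. f i) x = (\<Sum>i\<in>I. f i x)"
  by (induction I rule: infinite_finite_induct) auto

lemma dotn_plus_left: "dotn k (a + b) x = dotn k a x + dotn k b x"
  by (simp add: dotn_def sum.distrib distrib_right)

lemma dotn_minus_right: "dotn k a (x - y) = dotn k a x - dotn k a y"
  by (simp add: dotn_def sum_subtractf right_diff_distrib)

lemma dotn_sum_left: "dotn k (\<Sum>i\<in>I. a i) x = (\<Sum>i\<in>I. dotn k (a i) x)"
  unfolding dotn_def sum_fun_app sum_distrib_right by (rule sum.swap)

lemma dotn_scale: "dotn k (\<lambda>j. c * a j) x = c * dotn k a x"
  by (simp add: dotn_def sum_distrib_left mult.assoc)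

lemma dotn_mat: "dotn p \<alpha> (mat_vec p m M y) = dotn m (matT_vec p m M \<alpha>) y"
proof -
  have "dotn p \<alpha> (mat_vec p m M y) = (\<Sum>r<p. \<Sum>j<m. \<alpha> r * (M r j * y j))"
    by (simp add: dotn_def mat_vec_def sum_distrib_left)
  also have "\<dots> = (\<Sum>j<m. \<Sum>r<p. \<alpha> r * (M r j * y j))" by (rule sum.swap)
  also have "\<dots> = dotn m (matT_vec p m M \<alpha>) y"
    unfolding dotn_def matT_vec_def by (rule sum.cong) (auto simp: sum_distrib_left mult_ac)
  finally show ?thesis .
qed

lemma mat_vec_vecs: "mat_vec p m M y \<in> vecs p"
  by (simp add: vecs_def mat_vec_def)

lemma sum_inf_bound:
  fixes g :: "'i \<Rightarrow> 'v \<Rightarrow> real"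
  assumes "finite I"
  shows "(\<forall>i\<in>I. Y i \<noteq> {}) \<Longrightarrow> (\<And>y. (\<forall>i\<in>I. y i \<in> Y i) \<Longrightarrow> K \<le> (\<Sum>i\<in>I. g i (y i)))
    \<Longrightarrow> ereal K \<le> (\<Sum>i\<in>I. INF v\<in>Y i. ereal (g i v))"
using assms proof (induction I arbitrary: K rule: finite_induct)
  case empty
  then show ?case by (simp add: zero_ereal_def)
next
  case (insert j I)
  define B where "B = (\<Sum>i\<in>I. INF v\<in>Y i. ereal (g i v))"
  have IHv: "ereal (K - g j v) \<le> B" if v: "v \<in> Y j" for v
    unfolding B_def
  proof (rule insert.IH)
    show "\<forall>i\<in>I. Y i \<noteq> {}" using insert.prems by auto
    fix y assume y: "\<forall>i\<in>I. y i \<in> Y i"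
    have "K \<le> (\<Sum>i\<in>insert j I. g i ((y(j:=v)) i))" using insert.prems(2)[of "y(j:=v)"] y v by auto
    also have "\<dots> = g j v + (\<Sum>i\<in>I. g i (y i))"
      using insert.hyps by (simp add: sum.insert) (intro sum.cong, auto)
    finally show "K - g j v \<le> (\<Sum>i\<in>I. g i (y i))" by simp
  qed
  have Bne: "B \<noteq> \<infinity>"
  proof -
    have "(INF v\<in>Y i. ereal (g i v)) \<noteq> \<infinity>" if "i \<in> I" for i
    proof -
      have "Y i \<noteq> {}" using insert.prems(1) that by simp
      then obtain v where "v \<in> Y i" by blast
      then have "(INF v\<in>Y i. ereal (g i v)) \<le> ereal (g i v)" by (rule INF_lower)
      then show ?thesis by auto
    qed
    then show ?thesis unfolding B_def by (simp add: sum_Pinfty)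
  qed
  obtain v0 where v0: "v0 \<in> Y j" using insert.prems by auto
  have "B \<noteq> -\<infinity>" using IHv[OF v0] by auto
  with Bne obtain b where b: "B = ereal b" by (cases B) auto
  have "ereal (K - b) \<le> (INF v\<in>Y j. ereal (g j v))"
  proof (rule INF_greatest)
    fix v assume "v \<in> Y j"
    then have "ereal (K - g j v) \<le> ereal b" using IHv b by auto
    then show "ereal (K - b) \<le> ereal (g j v)" by simp
  qed
  then have "ereal (K - b) + ereal b \<le> (INF v\<in>Y j. ereal (g j v)) + B" using b by (intro add_mono) auto
  then show ?case using insert.hyps by (simp add: B_def)
qed



lemma dotn_zero_left[simp]: "dotn k (\<lambda>_. 0) x = 0"
  by (simp add: dotn_def)

lemma sigY_le_epi:
  assumes "Y \<noteq> {}" "0 \<le> r0"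
  shows "sigma m Y (matT_vec p m Q \<alpha> + (\<lambda>j. r0 * d j)) \<le> sigma_epi p (epi p m Q d Y) \<alpha> r0"
  unfolding sigma_epi_def
proof (rule INF_greatest)
  fix z assume "z \<in> epi p m Q d Y"
  then obtain w th where z: "z = (w, th)" and vf: "valf p m Q d Y w \<le> ereal th"
    unfolding epi_def by auto
  define g where "g = (\<lambda>y. dotn m (matT_vec p m Q \<alpha> + (\<lambda>j. r0 * d j)) y)"
  have gy: "g y = dotn p \<alpha> w + r0 * dotn m d y" if "mat_vec p m Q y = w" for y
    unfolding g_def using that by (simp add: dotn_plus_left dotn_scale flip: dotn_mat)
  have sg: "sigma m Y (matT_vec p m Q \<alpha> + (\<lambda>j. r0 * d j)) \<le> ereal (g y)" if "y \<in> Y" for y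
    unfolding sigma_def g_def using that by (rule INF_lower)
  have fib: "{y \<in> Y. mat_vec p m Q y = w} \<noteq> {}"
  proof
    assume "{y \<in> Y. mat_vec p m Q y = w} = {}"
    then have "valf p m Q d Y w = \<infinity>" unfolding valf_def by (metis INF_empty top_ereal_def)
    with vf show False by simp
  qed
  show "sigma m Y (matT_vec p m Q \<alpha> + (\<lambda>j. r0 * d j)) \<le> ereal (dotn p \<alpha> (fst z) + r0 * snd z)"
  proof (cases "r0 = 0")
    case True
    from fib obtain y where y: "y \<in> Y" "mat_vec p m Q y = w" by blast
    show ?thesis using sg[OF y(1)] gy[OF y(2)] True z by simp
  next
    case False
    then have r0p: "r0 > 0" using assms by simp
    show ?thesis
    proof (rule ereal_le_epsilon2)
      fix e :: real assume e: "0 < e"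
      have "ereal th < ereal (th + e / r0)" using e r0p by simp
      with vf have "valf p m Q d Y w < ereal (th + e / r0)" by (rule le_less_trans)
      then obtain y where y: "y \<in> Y" "mat_vec p m Q y = w" "dotn m d y < th + e / r0"
        unfolding valf_def by (auto simp: INF_less_iff)
      have "r0 * dotn m d y < r0 * (th + e / r0)" using y(3) r0p by simp
      also have "\<dots> = r0 * th + e" using r0p by (simp add: field_simps)
      finally have "g y \<le> dotn p \<alpha> w + r0 * th + e" using gy[OF y(2)] by simp
      then show "sigma m Y (matT_vec p m Q \<alpha> + (\<lambda>j. r0 * d j)) \<le> ereal (dotn p \<alpha> (fst z) + r0 * snd z) + ereal e"
      proof -
        have "ereal (g y) \<le> ereal (dotn p \<alpha> (fst z) + r0 * snd z) + ereal e"
          using \<open>g y \<le> dotn p \<alpha> w + r0 * th + e\<close> z by simp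
        then show ?thesis using sg[OF y(1)] by (rule order_trans[rotated])
      qed
    qed
  qed
qed

lemma partA:
  assumes Y_ne: "\<forall>i<t. Y i \<noteq> {}" and \<rho>0_nonneg: "\<forall>i<t. 0 \<le> \<rho>0 i" and x: "x \<in> X"
    and cuts: "\<forall>i<t. sigma_epi (p i) (epi (p i) (m i) (Q i) (d i) (Y i)) (\<alpha> i) (\<rho>0 i)
                    \<le> ereal (dotn (p i) (\<alpha> i) (h i - mat_vec (p i) n (T i) x) + \<rho>0 i * \<theta> i)"
  shows "dual_obj n X t p m T Q h d Y \<rho> \<rho>0 \<alpha> \<le> ereal (dotn n \<rho> x + (\<Sum>i<t. \<rho>0 i * \<theta> i))"
proof -
  have s1: "sigma n X (\<rho> + (\<Sum>i<t. matT_vec (p i) n (T i) (\<alpha> i)))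
      \<le> ereal (dotn n (\<rho> + (\<Sum>i<t. matT_vec (p i) n (T i) (\<alpha> i))) x)"
    unfolding sigma_def using x by (rule INF_lower)
  have s2: "(\<Sum>i<t. sigma (m i) (Y i) (matT_vec (p i) (m i) (Q i) (\<alpha> i) + (\<lambda>j. \<rho>0 i * d i j)))
      \<le> (\<Sum>i<t. ereal (dotn (p i) (\<alpha> i) (h i - mat_vec (p i) n (T i) x) + \<rho>0 i * \<theta> i))"
  proof (rule sum_mono)
    fix i assume "i \<in> {..<t}"
    then show "sigma (m i) (Y i) (matT_vec (p i) (m i) (Q i) (\<alpha> i) + (\<lambda>j. \<rho>0 i * d i j))
      \<le> ereal (dotn (p i) (\<alpha> i) (h i - mat_vec (p i) n (T i) x) + \<rho>0 i * \<theta> i)"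
      using sigY_le_epi[of "Y i" "\<rho>0 i" "m i" "p i" "Q i" "\<alpha> i" "d i"] Y_ne \<rho>0_nonneg cuts
      by (auto intro: order_trans)
  qed
  have "dual_obj n X t p m T Q h d Y \<rho> \<rho>0 \<alpha> \<le>
      ereal (- (\<Sum>i<t. dotn (p i) (\<alpha> i) (h i))) + ereal (dotn n (\<rho> + (\<Sum>i<t. matT_vec (p i) n (T i) (\<alpha> i))) x)
      + (\<Sum>i<t. ereal (dotn (p i) (\<alpha> i) (h i - mat_vec (p i) n (T i) x) + \<rho>0 i * \<theta> i))"
    unfolding dual_obj_def using s1 s2 by (intro add_mono) auto
  also have "\<dots> = ereal (- (\<Sum>i<t. dotn (p i) (\<alpha> i) (h i)) + dotn n (\<rho> + (\<Sum>i<t. matT_vec (p i) n (T i) (\<alpha> i))) x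
      + (\<Sum>i<t. dotn (p i) (\<alpha> i) (h i - mat_vec (p i) n (T i) x) + \<rho>0 i * \<theta> i))"
    by (simp add: sum_ereal)
  also have "- (\<Sum>i<t. dotn (p i) (\<alpha> i) (h i)) + dotn n (\<rho> + (\<Sum>i<t. matT_vec (p i) n (T i) (\<alpha> i))) x
      + (\<Sum>i<t. dotn (p i) (\<alpha> i) (h i - mat_vec (p i) n (T i) x) + \<rho>0 i * \<theta> i)
      = dotn n \<rho> x + (\<Sum>i<t. \<rho>0 i * \<theta> i)"
    by (simp add: dotn_plus_left dotn_sum_left dotn_minus_right dotn_mat sum.distrib sum_subtractf)
  finally show ?thesis .
qed



lemma dotn_if_left: "dotn k (\<lambda>j. if c then f j else 0) x = (if c then dotn k f x else 0)"
  by (simp add: dotn_def)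

lemma delta2:
  assumes "i < t" "s < (p::nat\<Rightarrow>nat) i"
  shows "(\<Sum>i'<t. \<Sum>s'<p i'. (if i' = i \<and> s' = s then c else 0) * F i' s') = (c::real) * F i s"
proof -
  have "(\<Sum>s'<p i'. (if i' = i \<and> s' = s then c else 0) * F i' s') = (if i' = i then c * F i s else 0)" for i'
    using assms by (cases "i' = i") (simp_all add: if_distrib[of "\<lambda>u. u * _"] sum.delta cong: if_cong)
  then show ?thesis using assms by simp
qed

lemma ereal_split_bound:
  fixes f :: "'x \<Rightarrow> real" and t :: nat
  assumes "X \<noteq> {}" "\<forall>i<t. Y i \<noteq> {}"
    and "\<And>x y. x \<in> X \<Longrightarrow> (\<forall>i<t. y i \<in> Y i) \<Longrightarrow> K \<le> f x + (\<Sum>i<t. g i (y i))"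
  shows "ereal K \<le> (INF x\<in>X. ereal (f x)) + (\<Sum>i<t. INF v\<in>Y i. ereal (g i v))"
proof -
  define B where "B = (\<Sum>i<t. INF v\<in>Y i. ereal (g i v))"
  have IHx: "ereal (K - f x) \<le> B" if x: "x \<in> X" for x
    unfolding B_def
  proof (rule sum_inf_bound)
    show "\<forall>i\<in>{..<t}. Y i \<noteq> {}" using assms(2) by auto
    fix y assume "\<forall>i\<in>{..<t}. y i \<in> Y i"
    then have "K \<le> f x + (\<Sum>i<t. g i (y i))" using assms(3)[OF x, of y] by auto
    then show "K - f x \<le> (\<Sum>i<t. g i (y i))" by simp
  qed simp
  have Bne: "B \<noteq> \<infinity>"
  proof -
    have "(INF v\<in>Y i. ereal (g i v)) \<noteq> \<infinity>" if "i \<in> {..<t}" for i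
    proof -
      have "Y i \<noteq> {}" using assms(2) that by simp
      then obtain v where "v \<in> Y i" by blast
      then have "(INF v\<in>Y i. ereal (g i v)) \<le> ereal (g i v)" by (rule INF_lower)
      then show ?thesis by auto
    qed
    then show ?thesis unfolding B_def by (simp add: sum_Pinfty)
  qed
  obtain x0 where x0: "x0 \<in> X" using assms(1) by auto
  have "B \<noteq> -\<infinity>" using IHx[OF x0] by auto
  with Bne obtain b where b: "B = ereal b" by (cases B) auto
  have "ereal (K - b) \<le> (INF x\<in>X. ereal (f x))"
  proof (rule INF_greatest)
    fix x assume "x \<in> X"
    then have "ereal (K - f x) \<le> ereal b" using IHx b by auto
    then show "ereal (K - b) \<le> ereal (f x)" by simp
  qed
  then have "ereal (K - b) + ereal b \<le> (INF x\<in>X. ereal (f x)) + B" using b by (intro add_mono) auto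
  then show ?thesis by (simp add: B_def)
qed



lemma key:
  fixes n t :: nat and p m :: "nat \<Rightarrow> nat"
    and X :: "(nat \<Rightarrow> real) set" and Y :: "nat \<Rightarrow> (nat \<Rightarrow> real) set"
    and T Q :: "nat \<Rightarrow> nat \<Rightarrow> nat \<Rightarrow> real" and h d :: "nat \<Rightarrow> nat \<Rightarrow> real"
    and \<rho> :: "nat \<Rightarrow> real" and \<rho>0 :: "nat \<Rightarrow> real"
  assumes X_poly: "polyhedron n X" and X_ne: "X \<noteq> {}"
    and Y_poly: "\<forall>i<t. polyhedron (m i) (Y i)" and Y_ne: "\<forall>i<t. Y i \<noteq> {}"
    and h_dim: "\<forall>i<t. h i \<in> vecs (p i)"
    and V: "sigma_F n t (Fprime n X t p m T Q h d Y) \<rho> \<rho>0 = ereal V"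
    and e: "e > 0"
  shows "\<exists>\<alpha>. (\<forall>i<t. \<alpha> i \<in> vecs (p i)) \<and> ereal (V - e) \<le> dual_obj n X t p m T Q h d Y \<rho> \<rho>0 \<alpha>"
proof -
  obtain qX AX bX where Xd: "X = {x \<in> vecs n. \<forall>r<(qX::nat). dotn n (AX r) x \<le> bX r}"
    using X_poly unfolding polyhedron_def by blast
  have "\<forall>i. \<exists>qab::nat \<times> (nat \<Rightarrow> nat \<Rightarrow> real) \<times> (nat \<Rightarrow> real). i < t \<longrightarrow>
      Y i = {x \<in> vecs (m i). \<forall>r<fst qab. dotn (m i) (fst (snd qab) r) x \<le> snd (snd qab) r}"
  proof
    fix i show "\<exists>qab::nat \<times> (nat \<Rightarrow> nat \<Rightarrow> real) \<times> (nat \<Rightarrow> real). i < t \<longrightarrow>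
      Y i = {x \<in> vecs (m i). \<forall>r<fst qab. dotn (m i) (fst (snd qab) r) x \<le> snd (snd qab) r}"
    proof (cases "i < t")
      case True
      then obtain q A b where "Y i = {x \<in> vecs (m i). \<forall>r<(q::nat). dotn (m i) (A r) x \<le> b r}"
        using Y_poly unfolding polyhedron_def by blast
      then show ?thesis by (intro exI[of _ "(q,A,b)"]) simp
    qed simp
  qed
  from choice[OF this] obtain f :: "nat \<Rightarrow> nat \<times> (nat \<Rightarrow> nat \<Rightarrow> real) \<times> (nat \<Rightarrow> real)" where f: "\<forall>i. i < t \<longrightarrow>
      Y i = {x \<in> vecs (m i). \<forall>r<fst (f i). dotn (m i) (fst (snd (f i)) r) x \<le> snd (snd (f i)) r}"
    by (rule exE)
  define qY where "qY = (\<lambda>i. fst (f i))"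
  define AY where "AY = (\<lambda>i. fst (snd (f i)))"
  define bY where "bY = (\<lambda>i. snd (snd (f i)))"
  have Yd: "\<And>i. i < t \<Longrightarrow> Y i = {x \<in> vecs (m i). \<forall>r<qY i. dotn (m i) (AY i r) x \<le> bY i r}"
    using f unfolding qY_def AY_def bY_def by blast
  define J :: "(nat + nat \<times> nat) set" where
    "J = Inl ` {..<n} \<union> (\<lambda>(i,k). Inr (i,k)) ` (SIGMA i:{..<t}. {..<m i})"
  define xz where "xz = (\<lambda>z::(nat + nat \<times> nat) \<Rightarrow> real. \<lambda>k. if k < n then z (Inl k) else 0)"
  define yz where "yz = (\<lambda>(z::(nat + nat \<times> nat) \<Rightarrow> real) i k. if k < m i then z (Inr (i,k)) else 0)"
  define rv where "rv = (\<lambda>(ax::nat\<Rightarrow>real) (ay::nat\<Rightarrow>nat\<Rightarrow>real). (\<lambda>j. case j of Inl k \<Rightarrow> ax k | Inr (i,k) \<Rightarrow> ay i k))"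
  define lin where "lin = (\<lambda>a (z::(nat + nat \<times> nat) \<Rightarrow> real). \<Sum>j\<in>J. a j * z j)"
  define zz where "zz = (\<lambda>(x::nat\<Rightarrow>real) (y::nat\<Rightarrow>nat\<Rightarrow>real). (\<lambda>j. case j of Inl k \<Rightarrow> x k | Inr (i,k) \<Rightarrow> y i k))"
  have finJ: "finite J" unfolding J_def by auto
  have lin_rv: "lin (rv ax ay) z = dotn n ax (xz z) + (\<Sum>i<t. dotn (m i) (ay i) (yz z i))" for ax ay z
  proof -
    have disj: "Inl ` {..<n} \<inter> (\<lambda>(i,k). Inr (i,k)) ` (SIGMA i:{..<t}. {..<m i}) = {}" by auto
    have inj2: "inj_on (\<lambda>(i,k). (Inr (i,k) :: nat + nat \<times> nat)) (SIGMA i:{..<t}. {..<m i})"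
      by (auto simp: inj_on_def)
    have "lin (rv ax ay) z = (\<Sum>j\<in>Inl ` {..<n}. rv ax ay j * z j)
        + (\<Sum>j\<in>(\<lambda>(i,k). Inr (i,k)) ` (SIGMA i:{..<t}. {..<m i}). rv ax ay j * z j)"
      unfolding lin_def J_def by (rule sum.union_disjoint) (use disj in auto)
    also have "(\<Sum>j\<in>Inl ` {..<n}. rv ax ay j * z j) = (\<Sum>k<n. ax k * z (Inl k))"
      by (subst sum.reindex) (auto simp: rv_def)
    also have "(\<Sum>j\<in>(\<lambda>(i,k). Inr (i,k)) ` (SIGMA i:{..<t}. {..<m i}). rv ax ay j * z j)
        = (\<Sum>(i,k)\<in>(SIGMA i:{..<t}. {..<m i}). ay i k * z (Inr (i,k)))"
      by (subst sum.reindex[OF inj2]) (auto simp: rv_def case_prod_beta intro!: sum.cong)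
    also have "\<dots> = (\<Sum>i<t. \<Sum>k<m i. ay i k * z (Inr (i,k)))"
      by (subst sum.Sigma[symmetric]) auto
    finally show ?thesis
      by (simp add: dotn_def xz_def yz_def)
  qed
  have xz_zz: "xz (zz x y) = x" if "x \<in> vecs n" for x y
    using that by (auto simp: xz_def zz_def vecs_def)
  have yz_zz: "yz (zz x y) i = y i" if "y i \<in> vecs (m i)" for x y i
    using that by (auto simp: yz_def zz_def vecs_def)
  have Xsub: "X \<subseteq> vecs n" using Xd by auto
  have Ysub: "Y i \<subseteq> vecs (m i)" if "i < t" for i using Yd[OF that] by auto
  have xz_vecs: "xz z \<in> vecs n" for z by (simp add: xz_def vecs_def)
  have yz_vecs: "yz z i \<in> vecs (m i)" for z i by (simp add: yz_def vecs_def)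
  define cobj where "cobj = (\<lambda>z. dotn n \<rho> (xz z) + (\<Sum>i<t. \<rho>0 i * dotn (m i) (d i) (yz z i)))"
  define eqv where "eqv = (\<lambda>(\<alpha>::nat\<Rightarrow>nat\<Rightarrow>real) z. \<Sum>i<t. \<Sum>s<p i. \<alpha> i s *
      (mat_vec (p i) n (T i) (xz z) s + mat_vec (p i) (m i) (Q i) (yz z i) s))"
  define eqh where "eqh = (\<lambda>(\<alpha>::nat\<Rightarrow>nat\<Rightarrow>real). \<Sum>i<t. \<Sum>s<p i. \<alpha> i s * h i s)"
  define Pf where "Pf = {z. xz z \<in> X \<and> (\<forall>i<t. yz z i \<in> Y i)}"
  define S where "S = {(a,\<beta>). \<exists>\<alpha> lam0. 0 \<le> lam0 \<and>
      (\<forall>z\<in>Pf. lin a z - eqv \<alpha> z - lam0 * cobj z \<le> \<beta> - eqh \<alpha> - lam0 * (V - e))}"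
  define RX where "RX = (\<lambda>r. (rv (AX r) (\<lambda>_ _. 0), bX r)) ` {..<qX}"
  define RY where "RY = (\<lambda>(i,r). (rv (\<lambda>_. 0) (\<lambda>i' k. if i' = i then AY i r k else 0), bY i r))
      ` (SIGMA i:{..<t}. {..<qY i})"
  define REc where "REc = (\<lambda>(c,i,s). (rv (\<lambda>k. c * T i s k) (\<lambda>i' k. if i' = i then c * Q i s k else 0), c * h i s))
      ` ({1,-1} \<times> (SIGMA i:{..<t}. {..<p i}))"
  define RO where "RO = {(rv \<rho> (\<lambda>i k. \<rho>0 i * d i k), V - e)}"
  define R where "R = RX \<union> RY \<union> REc \<union> RO"
  have finR: "finite R" unfolding R_def RX_def RY_def REc_def RO_def by auto
  have lin_add: "lin (\<lambda>j. a j + a' j) z = lin a z + lin a' z" for a a' z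
    by (simp add: lin_def sum.distrib distrib_right)
  have lin_scale: "lin (\<lambda>j. c * a j) z = c * lin a z" for a c z
    by (simp add: lin_def sum_distrib_left mult.assoc)
  have lin_zero: "lin (\<lambda>_. 0) z = 0" for z by (simp add: lin_def)
  have eqv_add: "eqv (\<lambda>i s. \<alpha> i s + \<alpha>' i s) z = eqv \<alpha> z + eqv \<alpha>' z" for \<alpha> \<alpha>' z
    by (simp add: eqv_def sum.distrib distrib_right)
  have eqv_scale: "eqv (\<lambda>i s. c * \<alpha> i s) z = c * eqv \<alpha> z" for \<alpha> c z
    by (simp add: eqv_def sum_distrib_left mult.assoc)
  have eqh_add: "eqh (\<lambda>i s. \<alpha> i s + \<alpha>' i s) = eqh \<alpha> + eqh \<alpha>'" for \<alpha> \<alpha>'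
    by (simp add: eqh_def sum.distrib distrib_right)
  have eqh_scale: "eqh (\<lambda>i s. c * \<alpha> i s) = c * eqh \<alpha>" for \<alpha> c
    by (simp add: eqh_def sum_distrib_left mult.assoc)
  have lin_eq: "lin (rv (\<lambda>k. c * T i s k) (\<lambda>i' k. if i' = i then c * Q i s k else 0)) z
      = c * (mat_vec (p i) n (T i) (xz z) s + mat_vec (p i) (m i) (Q i) (yz z i) s)"
    if "i < t" "s < p i" for c i s z
    using that by (simp add: lin_rv dotn_if_left dotn_scale mat_vec_def dotn_def distrib_left)
  have coneS: "cone_of R \<subseteq> S"
  proof (rule cone_of_sub)
    show "(\<lambda>_. 0, 0) \<in> S" unfolding S_def
      by (auto intro!: exI[of _ "\<lambda>_ _. 0"] exI[of _ 0] simp: lin_zero eqv_def eqh_def)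
  next
    fix a b a' b' assume "(a,b) \<in> S" "(a',b') \<in> S"
    then obtain \<alpha> l \<alpha>' l' where l: "0 \<le> l" "\<forall>z\<in>Pf. lin a z - eqv \<alpha> z - l * cobj z \<le> b - eqh \<alpha> - l * (V - e)"
      and l': "0 \<le> l'" "\<forall>z\<in>Pf. lin a' z - eqv \<alpha>' z - l' * cobj z \<le> b' - eqh \<alpha>' - l' * (V - e)"
      unfolding S_def by blast
    show "(\<lambda>j. a j + a' j, b + b') \<in> S" unfolding S_def
    proof (intro CollectI case_prodI exI[of _ "\<lambda>i s. \<alpha> i s + \<alpha>' i s"] exI[of _ "l + l'"] conjI ballI)
      show "0 \<le> l + l'" using l l' by simp
      fix z assume "z \<in> Pf"
      then show "lin (\<lambda>j. a j + a' j) z - eqv (\<lambda>i s. \<alpha> i s + \<alpha>' i s) z - (l + l') * cobj z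
          \<le> b + b' - eqh (\<lambda>i s. \<alpha> i s + \<alpha>' i s) - (l + l') * (V - e)"
        using l(2) l'(2) by (simp add: lin_add eqv_add eqh_add distrib_right) (smt (verit) \<open>z \<in> Pf\<close>)
    qed
  next
    fix a b c assume "(a,b) \<in> S" and c: "0 \<le> (c::real)"
    then obtain \<alpha> l where l: "0 \<le> l" "\<forall>z\<in>Pf. lin a z - eqv \<alpha> z - l * cobj z \<le> b - eqh \<alpha> - l * (V - e)"
      unfolding S_def by blast
    show "(\<lambda>j. c * a j, c * b) \<in> S" unfolding S_def
    proof (intro CollectI case_prodI exI[of _ "\<lambda>i s. c * \<alpha> i s"] exI[of _ "c * l"] conjI ballI)
      show "0 \<le> c * l" using l c by simp
      fix z assume "z \<in> Pf"
      then have "c * (lin a z - eqv \<alpha> z - l * cobj z) \<le> c * (b - eqh \<alpha> - l * (V - e))"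
        using l(2) c by (intro mult_left_mono) auto
      then show "lin (\<lambda>j. c * a j) z - eqv (\<lambda>i s. c * \<alpha> i s) z - (c * l) * cobj z
          \<le> c * b - eqh (\<lambda>i s. c * \<alpha> i s) - (c * l) * (V - e)"
        by (simp add: lin_scale eqv_scale eqh_scale algebra_simps)
    qed
  next
    show "R \<subseteq> S"
    proof
      fix r assume "r \<in> R"
      then consider "r \<in> RX" | "r \<in> RY" | "r \<in> REc" | "r \<in> RO" unfolding R_def by blast
      then show "r \<in> S"
      proof cases
        case 1
        then obtain k where k0: "k \<in> {..<qX}" "r = (rv (AX k) (\<lambda>_ _. 0), bX k)" unfolding RX_def by (rule imageE)
        then have k: "k < qX" "r = (rv (AX k) (\<lambda>_ _. 0), bX k)" by auto
        show ?thesis unfolding S_def k(2)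
        proof (intro CollectI case_prodI exI[of _ "\<lambda>_ _. 0"] exI[of _ "0::real"] conjI ballI)
          fix z assume "z \<in> Pf"
          then have "dotn n (AX k) (xz z) \<le> bX k" using k(1) Xd unfolding Pf_def by auto
          then show "lin (rv (AX k) (\<lambda>_ _. 0)) z - eqv (\<lambda>_ _. 0) z - 0 * cobj z \<le> bX k - eqh (\<lambda>_ _. 0) - 0 * (V - e)"
            by (simp add: lin_rv eqv_def eqh_def)
        qed simp
      next
        case 2
        then obtain ik where ik: "ik \<in> (SIGMA i:{..<t}. {..<qY i})"
            "r = (\<lambda>(i,r). (rv (\<lambda>_. 0) (\<lambda>i' k. if i' = i then AY i r k else 0), bY i r)) ik"
          unfolding RY_def by (rule imageE)
        obtain i k where "ik = (i,k)" by (cases ik)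
        then have k: "i < t" "k < qY i"
            "r = (rv (\<lambda>_. 0) (\<lambda>i' k'. if i' = i then AY i k k' else 0), bY i k)"
          using ik by auto
        show ?thesis unfolding S_def k(3)
        proof (intro CollectI case_prodI exI[of _ "\<lambda>_ _. 0"] exI[of _ "0::real"] conjI ballI)
          fix z assume "z \<in> Pf"
          then have "dotn (m i) (AY i k) (yz z i) \<le> bY i k" using k(1,2) Yd[OF k(1)] unfolding Pf_def by auto
          then show "lin (rv (\<lambda>_. 0) (\<lambda>i' k'. if i' = i then AY i k k' else 0)) z - eqv (\<lambda>_ _. 0) z - 0 * cobj z
              \<le> bY i k - eqh (\<lambda>_ _. 0) - 0 * (V - e)"
            using k(1) by (simp add: lin_rv eqv_def eqh_def dotn_if_left)
        qed simp
      next
        case 3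
        then obtain cis where ik: "cis \<in> {1,-1} \<times> (SIGMA i:{..<t}. {..<p i})"
            "r = (\<lambda>(c,i,s). (rv (\<lambda>k. c * T i s k) (\<lambda>i' k. if i' = i then c * Q i s k else 0), c * h i s)) cis"
          unfolding REc_def by (rule imageE)
        obtain c i s where "cis = (c,i,s)" by (cases cis)
        then have k: "i < t" "s < p i"
            "r = (rv (\<lambda>k. c * T i s k) (\<lambda>i' k. if i' = i then c * Q i s k else 0), c * h i s)"
          using ik by auto
        show ?thesis unfolding S_def k(3)
        proof (intro CollectI case_prodI exI[of _ "\<lambda>i' s'. if i' = i \<and> s' = s then c else 0"] exI[of _ "0::real"] conjI ballI)
          fix z assume "z \<in> Pf"
          have "eqv (\<lambda>i' s'. if i' = i \<and> s' = s then c else 0) z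
              = c * (mat_vec (p i) n (T i) (xz z) s + mat_vec (p i) (m i) (Q i) (yz z i) s)"
            unfolding eqv_def by (rule delta2[of i t s p, OF k(1,2)])
          moreover have "eqh (\<lambda>i' s'. if i' = i \<and> s' = s then c else 0) = c * h i s"
            unfolding eqh_def by (rule delta2[of i t s p, OF k(1,2)])
          ultimately show "lin (rv (\<lambda>k. c * T i s k) (\<lambda>i' k. if i' = i then c * Q i s k else 0)) z
              - eqv (\<lambda>i' s'. if i' = i \<and> s' = s then c else 0) z - 0 * cobj z
              \<le> c * h i s - eqh (\<lambda>i' s'. if i' = i \<and> s' = s then c else 0) - 0 * (V - e)"
            using lin_eq[OF k(1,2)] by simp
        qed simp
      next
        case 4
        then have k: "r = (rv \<rho> (\<lambda>i k. \<rho>0 i * d i k), V - e)" unfolding RO_def by blast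
        show ?thesis unfolding S_def k
        proof (intro CollectI case_prodI exI[of _ "\<lambda>_ _. 0"] exI[of _ "1::real"] conjI ballI)
          fix z assume "z \<in> Pf"
          show "lin (rv \<rho> (\<lambda>i k. \<rho>0 i * d i k)) z - eqv (\<lambda>_ _. 0) z - 1 * cobj z
              \<le> V - e - eqh (\<lambda>_ _. 0) - 1 * (V - e)"
            by (simp add: lin_rv eqv_def eqh_def cobj_def dotn_scale)
        qed simp
      qed
    qed
  qed
  have inR: "r \<in> R" if "r \<in> RX \<or> r \<in> RY \<or> r \<in> REc \<or> r \<in> RO" for r
    using that unfolding R_def by blast
  have infeas: "\<not>(\<exists>z. \<forall>r\<in>R. lin (fst r) z \<le> snd r)"
  proof
    assume "\<exists>z. \<forall>r\<in>R. lin (fst r) z \<le> snd r"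
    then obtain z where z: "\<forall>r\<in>R. lin (fst r) z \<le> snd r" by blast
    define x where "x = xz z"
    define y where "y = yz z"
    have xX: "x \<in> X" unfolding Xd
    proof (intro CollectI conjI allI impI)
      show "x \<in> vecs n" unfolding x_def by (rule xz_vecs)
      fix k assume k: "k < qX"
      have "(rv (AX k) (\<lambda>_ _. 0), bX k) \<in> RX" unfolding RX_def by (rule rev_image_eqI[of k]) (use k in auto)
      then have "lin (rv (AX k) (\<lambda>_ _. 0)) z \<le> bX k" using z inR by fastforce
      then show "dotn n (AX k) x \<le> bX k" by (simp add: lin_rv x_def)
    qed
    have yY: "y i \<in> Y i" if i: "i < t" for i unfolding Yd[OF i]
    proof (intro CollectI conjI allI impI)
      show "y i \<in> vecs (m i)" unfolding y_def by (rule yz_vecs)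
      fix k assume k: "k < qY i"
      have "(rv (\<lambda>_. 0) (\<lambda>i' k'. if i' = i then AY i k k' else 0), bY i k) \<in> RY"
        unfolding RY_def by (rule rev_image_eqI[of "(i,k)"]) (use k i in auto)
      then have "lin (rv (\<lambda>_. 0) (\<lambda>i' k'. if i' = i then AY i k k' else 0)) z \<le> bY i k" using z inR by fastforce
      then show "dotn (m i) (AY i k) (y i) \<le> bY i k" using i by (simp add: lin_rv y_def dotn_if_left)
    qed
    have eqs: "mat_vec (p i) n (T i) x s + mat_vec (p i) (m i) (Q i) (y i) s = h i s" if i: "i < t" and s: "s < p i" for i s
    proof -
      have "c * (mat_vec (p i) n (T i) x s + mat_vec (p i) (m i) (Q i) (y i) s) \<le> c * h i s" if c: "c \<in> {1,-1}" for c
      proof -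
        have "(rv (\<lambda>k. c * T i s k) (\<lambda>i' k. if i' = i then c * Q i s k else 0), c * h i s) \<in> REc"
          unfolding REc_def by (rule rev_image_eqI[of "(c,i,s)"]) (use c i s in auto)
        then have "lin (rv (\<lambda>k. c * T i s k) (\<lambda>i' k. if i' = i then c * Q i s k else 0)) z \<le> c * h i s"
          using z inR by fastforce
        then show ?thesis using lin_eq[OF i s] by (simp add: x_def y_def)
      qed
      from this[of 1] this[of "-1"] show ?thesis by simp
    qed
    have Qy: "mat_vec (p i) (m i) (Q i) (y i) = h i - mat_vec (p i) n (T i) x" if i: "i < t" for i
    proof
      fix s show "mat_vec (p i) (m i) (Q i) (y i) s = (h i - mat_vec (p i) n (T i) x) s"
      proof (cases "s < p i")
        case True then show ?thesis using eqs[OF i True] by simp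
      next
        case False then show ?thesis using h_dim i by (simp add: mat_vec_def vecs_def)
      qed
    qed
    define th where "th = (\<lambda>i. if i < t then dotn (m i) (d i) (y i) else 0)"
    have inF: "(x, th) \<in> Fprime n X t p m T Q h d Y"
      unfolding Fprime_def
    proof (intro CollectI case_prodI conjI allI impI xX)
      show "th \<in> vecs t" by (simp add: th_def vecs_def)
      fix i assume i: "i < t"
      have w: "h i - mat_vec (p i) n (T i) x \<in> vecs (p i)"
        using h_dim i mat_vec_vecs[of "p i" n "T i" x] by (simp add: vecs_def)
      have "valf (p i) (m i) (Q i) (d i) (Y i) (h i - mat_vec (p i) n (T i) x) \<le> ereal (dotn (m i) (d i) (y i))"
        unfolding valf_def by (rule INF_lower) (use yY[OF i] Qy[OF i] in auto)
      then show "(h i - mat_vec (p i) n (T i) x, th i) \<in> epi (p i) (m i) (Q i) (d i) (Y i)"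
        using w i by (simp add: epi_def th_def)
    qed
    have "sigma_F n t (Fprime n X t p m T Q h d Y) \<rho> \<rho>0 \<le> ereal (dotn n \<rho> x + (\<Sum>i<t. \<rho>0 i * th i))"
      unfolding sigma_F_def using inF by (rule INF_lower2) simp
    also have "dotn n \<rho> x + (\<Sum>i<t. \<rho>0 i * th i) = cobj z"
      unfolding cobj_def x_def y_def th_def by simp
    also have "cobj z \<le> V - e"
    proof -
      have "(rv \<rho> (\<lambda>i k. \<rho>0 i * d i k), V - e) \<in> RO" unfolding RO_def by simp
      then have "lin (rv \<rho> (\<lambda>i k. \<rho>0 i * d i k)) z \<le> V - e" using z inR by fastforce
      then show ?thesis by (simp add: lin_rv cobj_def dotn_scale)
    qed
    finally show False using V e by simp
  qed
  from fm[OF finJ finR infeas[unfolded lin_def]] obtain a b where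
    ab: "(a,b) \<in> cone_of R" "\<forall>j\<in>J. a j = 0" "b < 0" by blast
  from coneS ab(1) have "(a,b) \<in> S" by (rule subsetD)
  then have "\<exists>\<alpha> l. 0 \<le> l \<and> (\<forall>z\<in>Pf. lin a z - eqv \<alpha> z - l * cobj z \<le> b - eqh \<alpha> - l * (V - e))"
    unfolding S_def by simp
  then obtain \<alpha> l where l: "0 \<le> l"
    and lS: "\<forall>z\<in>Pf. lin a z - eqv \<alpha> z - l * cobj z \<le> b - eqh \<alpha> - l * (V - e)"
    by blast
  have lina: "lin a z = 0" for z unfolding lin_def using ab(2) by simp
  have Fne: "Fprime n X t p m T Q h d Y \<noteq> {}"
  proof
    assume "Fprime n X t p m T Q h d Y = {}"
    then have "sigma_F n t (Fprime n X t p m T Q h d Y) \<rho> \<rho>0 = \<infinity>"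
      unfolding sigma_F_def by (simp add: top_ereal_def)
    with V show False by simp
  qed
  then obtain x0 th0 where x0F: "(x0, th0) \<in> Fprime n X t p m T Q h d Y" by auto
  then have x0X: "x0 \<in> X" and x0e: "\<forall>i<t. (h i - mat_vec (p i) n (T i) x0, th0 i) \<in> epi (p i) (m i) (Q i) (d i) (Y i)"
    unfolding Fprime_def by auto
  have "\<forall>i. \<exists>yi. i < t \<longrightarrow> yi \<in> Y i \<and> mat_vec (p i) (m i) (Q i) yi = h i - mat_vec (p i) n (T i) x0"
  proof
    fix i show "\<exists>yi. i < t \<longrightarrow> yi \<in> Y i \<and> mat_vec (p i) (m i) (Q i) yi = h i - mat_vec (p i) n (T i) x0"
    proof (cases "i < t")
      case True
      then have vf: "valf (p i) (m i) (Q i) (d i) (Y i) (h i - mat_vec (p i) n (T i) x0) \<le> ereal (th0 i)"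
        using x0e by (auto simp: epi_def)
      have "{yi \<in> Y i. mat_vec (p i) (m i) (Q i) yi = h i - mat_vec (p i) n (T i) x0} \<noteq> {}"
      proof
        assume "{yi \<in> Y i. mat_vec (p i) (m i) (Q i) yi = h i - mat_vec (p i) n (T i) x0} = {}"
        then have "valf (p i) (m i) (Q i) (d i) (Y i) (h i - mat_vec (p i) n (T i) x0) = \<infinity>"
          unfolding valf_def by (metis INF_empty top_ereal_def)
        with vf show False by simp
      qed
      then show ?thesis by blast
    qed simp
  qed
  from choice[OF this] obtain y0 :: "nat \<Rightarrow> nat \<Rightarrow> real" where
    y0: "\<forall>i. i < t \<longrightarrow> y0 i \<in> Y i \<and> mat_vec (p i) (m i) (Q i) (y0 i) = h i - mat_vec (p i) n (T i) x0"
    by (rule exE)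
  define z0 where "z0 = zz x0 y0"
  have xz0: "xz z0 = x0" unfolding z0_def using x0X Xsub by (intro xz_zz) auto
  have yz0: "yz z0 i = y0 i" if "i < t" for i unfolding z0_def using y0 that Ysub by (intro yz_zz) auto
  have z0P: "z0 \<in> Pf" unfolding Pf_def using xz0 yz0 x0X y0 by auto
  have "eqv \<alpha> z0 = eqh \<alpha>" unfolding eqv_def eqh_def
  proof (intro sum.cong refl)
    fix i s assume i: "i \<in> {..<t}" and s: "s \<in> {..<p i}"
    have "mat_vec (p i) (m i) (Q i) (y0 i) s = h i s - mat_vec (p i) n (T i) x0 s"
      using y0 i by simp
    then show "\<alpha> i s * (mat_vec (p i) n (T i) (xz z0) s + mat_vec (p i) (m i) (Q i) (yz z0 i) s) = \<alpha> i s * h i s"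
      using xz0 yz0 i by simp
  qed
  then have "- l * cobj z0 \<le> b - l * (V - e)" using lS z0P lina by fastforce
  then have lpos: "l > 0" using ab(3) l by (cases "l = 0") auto
  define \<alpha>t where "\<alpha>t = (\<lambda>i s. if s < p i then \<alpha> i s / l else 0)"
  have \<alpha>t_vecs: "\<forall>i<t. \<alpha>t i \<in> vecs (p i)" by (simp add: \<alpha>t_def vecs_def)
  have eqv_t: "eqv \<alpha> z = l * eqv \<alpha>t z" for z
    unfolding eqv_def sum_distrib_left using lpos by (intro sum.cong refl) (simp add: \<alpha>t_def)
  have eqh_t: "eqh \<alpha> = l * eqh \<alpha>t"
    unfolding eqh_def sum_distrib_left using lpos by (intro sum.cong refl) (simp add: \<alpha>t_def)
  define c0 where "c0 = - (\<Sum>i<t. dotn (p i) (\<alpha>t i) (h i))"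
  define fX where "fX = (\<lambda>x. dotn n (\<rho> + (\<Sum>i<t. matT_vec (p i) n (T i) (\<alpha>t i))) x)"
  define gY where "gY = (\<lambda>i v. dotn (m i) (matT_vec (p i) (m i) (Q i) (\<alpha>t i) + (\<lambda>j. \<rho>0 i * d i j)) v)"
  have pw: "V - e - c0 \<le> fX x + (\<Sum>i<t. gY i (y i))" if x: "x \<in> X" and y: "\<forall>i<t. y i \<in> Y i" for x y
  proof -
    define z where "z = zz x y"
    have xzz: "xz z = x" unfolding z_def using x Xsub by (intro xz_zz) auto
    have yzz: "yz z i = y i" if "i < t" for i unfolding z_def using y that Ysub by (intro yz_zz) auto
    have zP: "z \<in> Pf" unfolding Pf_def using xzz yzz x y by auto
    have "- eqv \<alpha> z - l * cobj z < - eqh \<alpha> - l * (V - e)" using lS zP lina ab(3) by fastforce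
    then have "l * (V - e) < l * (eqv \<alpha>t z + cobj z - eqh \<alpha>t)"
      unfolding eqv_t eqh_t by (simp add: algebra_simps)
    then have lt: "V - e < eqv \<alpha>t z + cobj z - eqh \<alpha>t" using lpos by simp
    have e1: "eqv \<alpha>t z = (\<Sum>i<t. dotn n (matT_vec (p i) n (T i) (\<alpha>t i)) x + dotn (m i) (matT_vec (p i) (m i) (Q i) (\<alpha>t i)) (y i))"
      unfolding eqv_def
    proof (intro sum.cong refl)
      fix i assume i: "i \<in> {..<t}"
      have "(\<Sum>s<p i. \<alpha>t i s * (mat_vec (p i) n (T i) (xz z) s + mat_vec (p i) (m i) (Q i) (yz z i) s))
          = dotn (p i) (\<alpha>t i) (mat_vec (p i) n (T i) x) + dotn (p i) (\<alpha>t i) (mat_vec (p i) (m i) (Q i) (y i))"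
        using i xzz yzz by (simp add: dotn_def sum.distrib distrib_left)
      then show "(\<Sum>s<p i. \<alpha>t i s * (mat_vec (p i) n (T i) (xz z) s + mat_vec (p i) (m i) (Q i) (yz z i) s))
          = dotn n (matT_vec (p i) n (T i) (\<alpha>t i)) x + dotn (m i) (matT_vec (p i) (m i) (Q i) (\<alpha>t i)) (y i)"
        by (simp add: dotn_mat)
    qed
    have e2: "eqh \<alpha>t = (\<Sum>i<t. dotn (p i) (\<alpha>t i) (h i))" unfolding eqh_def dotn_def ..
    have e3: "cobj z = dotn n \<rho> x + (\<Sum>i<t. \<rho>0 i * dotn (m i) (d i) (y i))"
      unfolding cobj_def xzz using yzz by simp
    have e4: "fX x + (\<Sum>i<t. gY i (y i)) = dotn n \<rho> x + (\<Sum>i<t. dotn n (matT_vec (p i) n (T i) (\<alpha>t i)) x)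
        + (\<Sum>i<t. dotn (m i) (matT_vec (p i) (m i) (Q i) (\<alpha>t i)) (y i) + \<rho>0 i * dotn (m i) (d i) (y i))"
      unfolding fX_def gY_def by (simp add: dotn_plus_left dotn_sum_left dotn_scale)
    show ?thesis using lt unfolding e1 e2 e3 e4 c0_def by (simp add: sum.distrib)
  qed
  have "ereal (V - e - c0) \<le> (INF x\<in>X. ereal (fX x)) + (\<Sum>i<t. INF v\<in>Y i. ereal (gY i v))"
    by (rule ereal_split_bound[OF X_ne Y_ne pw])
  then have "ereal c0 + ereal (V - e - c0) \<le> ereal c0 + ((INF x\<in>X. ereal (fX x)) + (\<Sum>i<t. INF v\<in>Y i. ereal (gY i v)))"
    by (rule add_left_mono)
  also have "\<dots> = dual_obj n X t p m T Q h d Y \<rho> \<rho>0 \<alpha>t"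
    unfolding dual_obj_def sigma_def c0_def fX_def gY_def by (simp add: add.assoc)
  finally have "ereal (V - e) \<le> dual_obj n X t p m T Q h d Y \<rho> \<rho>0 \<alpha>t" by simp
  then show ?thesis using \<alpha>t_vecs by blast
qed

theorem mainTheorem4:
  fixes n t :: nat and p m :: "nat \<Rightarrow> nat"
    and X :: "(nat \<Rightarrow> real) set" and Y :: "nat \<Rightarrow> (nat \<Rightarrow> real) set"
    and T Q :: "nat \<Rightarrow> nat \<Rightarrow> nat \<Rightarrow> real" and h d :: "nat \<Rightarrow> nat \<Rightarrow> real"
    and \<rho> :: "nat \<Rightarrow> real" and \<rho>0 :: "nat \<Rightarrow> real"
    and \<alpha>hat :: "nat \<Rightarrow> nat \<Rightarrow> real"
  assumes X_poly: "polyhedron n X" and X_ne: "X \<noteq> {}"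
    and Y_poly: "\<forall>i<t. polyhedron (m i) (Y i)" and Y_ne: "\<forall>i<t. Y i \<noteq> {}"
    and h_dim: "\<forall>i<t. h i \<in> vecs (p i)" and d_dim: "\<forall>i<t. d i \<in> vecs (m i)"
    and \<rho>_dim: "\<rho> \<in> vecs n" and \<rho>0_nonneg: "\<forall>i<t. 0 \<le> \<rho>0 i"
    and finite_sigma: "\<bar>sigma_F n t (Fprime n X t p m T Q h d Y) \<rho> \<rho>0\<bar> \<noteq> \<infinity>"
    and \<alpha>hat_dim: "\<forall>i<t. \<alpha>hat i \<in> vecs (p i)"
    and \<alpha>hat_opt: "\<forall>\<alpha>. (\<forall>i<t. \<alpha> i \<in> vecs (p i)) \<longrightarrow>
                      dual_obj n X t p m T Q h d Y \<rho> \<rho>0 \<alpha> \<le> dual_obj n X t p m T Q h d Y \<rho> \<rho>0 \<alpha>hat"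
  shows "\<forall>x \<theta>. x \<in> X \<longrightarrow>
           (\<forall>i<t. sigma_epi (p i) (epi (p i) (m i) (Q i) (d i) (Y i)) (\<alpha>hat i) (\<rho>0 i)
                    \<le> ereal (dotn (p i) (\<alpha>hat i) (h i - mat_vec (p i) n (T i) x) + \<rho>0 i * \<theta> i))
           \<longrightarrow> sigma_F n t (Fprime n X t p m T Q h d Y) \<rho> \<rho>0
                 \<le> ereal (dotn n \<rho> x + (\<Sum>i<t. \<rho>0 i * \<theta> i))"
proof -
  obtain V where V: "sigma_F n t (Fprime n X t p m T Q h d Y) \<rho> \<rho>0 = ereal V"
    using finite_sigma by (cases "sigma_F n t (Fprime n X t p m T Q h d Y) \<rho> \<rho>0") auto
  have D: "ereal V \<le> dual_obj n X t p m T Q h d Y \<rho> \<rho>0 \<alpha>hat"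
  proof (rule ereal_le_epsilon2)
    fix e :: real assume e: "0 < e"
    from key[OF X_poly X_ne Y_poly Y_ne h_dim V e] obtain \<alpha> where
      a: "\<forall>i<t. \<alpha> i \<in> vecs (p i)" "ereal (V - e) \<le> dual_obj n X t p m T Q h d Y \<rho> \<rho>0 \<alpha>"
      by blast
    have "ereal (V - e) \<le> dual_obj n X t p m T Q h d Y \<rho> \<rho>0 \<alpha>hat"
      using a \<alpha>hat_opt order_trans by blast
    then show "ereal V \<le> dual_obj n X t p m T Q h d Y \<rho> \<rho>0 \<alpha>hat + ereal e"
      by (cases "dual_obj n X t p m T Q h d Y \<rho> \<rho>0 \<alpha>hat") auto
  qed
  show ?thesis
  proof (intro allI impI)
    fix x \<theta> assume x: "x \<in> X" and cuts: "\<forall>i<t. sigma_epi (p i) (epi (p i) (m i) (Q i) (d i) (Y i)) (\<alpha>hat i) (\<rho>0 i)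
                    \<le> ereal (dotn (p i) (\<alpha>hat i) (h i - mat_vec (p i) n (T i) x) + \<rho>0 i * \<theta> i)"
    have "dual_obj n X t p m T Q h d Y \<rho> \<rho>0 \<alpha>hat \<le> ereal (dotn n \<rho> x + (\<Sum>i<t. \<rho>0 i * \<theta> i))"
      by (rule partA[OF Y_ne \<rho>0_nonneg x cuts])
    with D show "sigma_F n t (Fprime n X t p m T Q h d Y) \<rho> \<rho>0
                 \<le> ereal (dotn n \<rho> x + (\<Sum>i<t. \<rho>0 i * \<theta> i))"
      unfolding V by (rule order_trans)
  qed
qed

end
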